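(* Let $p\neq0$ and let $\lambda,\mu$ be nonzero finite Borel measures on $\mathbb{S}^{n-1}$. Then a convex body $K\in\mathcal{K}^n_0$ is a solution of the maximization problem $\sup\{\Phi_{\lambda,\mu,p}(\rho_L):L\in\mathcal{K}^n_0\}$ if and only if $\rho_K$ is a solution of the maximization problem $\sup\{\Phi_{\lambda,\mu,p}(f):f\in C^+(\mathbb{S}^{n-1})\}$.
   Context: $\mathcal{K}^n_0$ is the set of compact convex subsets of $\mathbb{R}^n$ containing the origin in their interior; for $K\in\mathcal{K}^n_0$, $h_K(x)=\max_{y\in K}\langle y,x\rangle$ and $\rho_K(u)=\max\{t>0:tu\in K\}$. $C^+(\mathbb{S}^{n-1})$ denotes the positive continuous functions on $\mathbb{S}^{n-1}$. For $f\in C^+(\mathbb{S}^{n-1})$, $\langle f\rangle=\mathrm{conv}\{f(u)u:u\in\mathbb{S}^{n-1}\}$. For a measure $\nu$, $|\nu|$ denotes its total mass. The functional is $$\Phi_{\lambda,\mu,p}(f)=-\frac{1}{|\lambda|}\int_{\mathbb{S}^{n-1}}\log h_{\langle f\rangle}(x)\,d\lambda(x)-\frac1p\log\Big(\frac{1}{|\mu|}\int_{\mathbb{S}^{n-1}}f^{-p}(u)\,d\mu(u)\Big).$$ *)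

theory Defs
  imports "HOL-Analysis.Analysis" "HOL-Probability.Probability"
begin

abbreviation Sph :: "'a::euclidean_space set" where
  "Sph \<equiv> sphere 0 1"

definition convex_bodies_0 :: "'a::euclidean_space set set" where
  "convex_bodies_0 = {K. compact K \<and> convex K \<and> 0 \<in> interior K}"

definition supp_fun :: "'a::euclidean_space set \<Rightarrow> 'a \<Rightarrow> real" where
  "supp_fun K x = (SUP y\<in>K. y \<bullet> x)"

definition radial_fun :: "'a::euclidean_space set \<Rightarrow> 'a \<Rightarrow> real" where
  "radial_fun K u = Sup {t. t > 0 \<and> t *\<^sub>R u \<in> K}"

text \<open>Positive continuous functions on the sphere (values off the sphere are irrelevant).\<close>
definition Cplus :: "('a::euclidean_space \<Rightarrow> real) set" where
  "Cplus = {f. continuous_on Sph f \<and> (\<forall>u\<in>Sph. f u > 0)}"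

definition wulff :: "('a::euclidean_space \<Rightarrow> real) \<Rightarrow> 'a set" where
  "wulff f = convex hull ((\<lambda>u. f u *\<^sub>R u) ` Sph)"

definition sphere_measure :: "'a::euclidean_space measure \<Rightarrow> bool" where
  "sphere_measure M \<longleftrightarrow> sets M = sets (restrict_space borel Sph) \<and> finite_measure M
     \<and> emeasure M (space M) \<noteq> 0"

definition Phi :: "'a::euclidean_space measure \<Rightarrow> 'a measure \<Rightarrow> real \<Rightarrow> ('a \<Rightarrow> real) \<Rightarrow> real" where
  "Phi lam mu p f =
     - (1 / measure lam (space lam)) * (\<integral>x. ln (supp_fun (wulff f) x) \<partial>lam)
     - (1 / p) * ln ((1 / measure mu (space mu)) * (\<integral>u. f u powr (- p) \<partial>mu))"

end

theory Submission
  imports Defs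
begin


lemma Sph_ne: "(Sph :: 'a::euclidean_space set) \<noteq> {}"
proof -
  obtain b :: 'a where "b \<in> Basis" using nonempty_Basis by blast
  then have "b \<in> Sph" by simp
  then show ?thesis by blast
qed

lemma sm_space: "sphere_measure M \<Longrightarrow> space M = (Sph :: 'a::euclidean_space set)"
proof -
  assume M: "sphere_measure (M :: 'a measure)"
  then have "sets M = sets (restrict_space borel (Sph :: 'a set))" unfolding sphere_measure_def by blast
  then have "space M = space (restrict_space borel (Sph :: 'a set))" by (rule sets_eq_imp_space_eq)
  then show ?thesis by (simp add: space_restrict_space)
qed

lemma sm_pos: "sphere_measure M \<Longrightarrow> measure M (space M) > 0"
proof -
  assume a: "sphere_measure M"
  then interpret finite_measure M unfolding sphere_measure_def by blast
  have ne: "emeasure M (space M) \<noteq> 0" using a unfolding sphere_measure_def by blast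
  have "emeasure M (space M) = ennreal (measure M (space M))" by (rule emeasure_eq_measure)
  with ne have "measure M (space M) \<noteq> 0" by auto
  moreover have "measure M (space M) \<ge> 0" by (rule measure_nonneg)
  ultimately show ?thesis by linarith
qed

lemma sm_integrable:
  fixes g :: "'a::euclidean_space \<Rightarrow> real"
  assumes M: "sphere_measure M" and c: "continuous_on Sph g"
  shows "integrable M g"
proof -
  interpret finite_measure M using M unfolding sphere_measure_def by blast
  have se: "sets M = sets (restrict_space borel (Sph::'a set))" using M unfolding sphere_measure_def by blast
  have eqm: "(borel_measurable M :: ('a \<Rightarrow> real) set) = borel_measurable (restrict_space borel (Sph::'a set))"
    by (rule measurable_cong_sets[OF se refl])
  have meas: "g \<in> borel_measurable M"
    unfolding eqm by (rule borel_measurable_continuous_on_restrict[OF c])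
  have "compact (norm ` g ` Sph)"
    by (intro compact_continuous_image continuous_intros c compact_sphere)
  then have "bounded (norm ` g ` Sph)" by (rule compact_imp_bounded)
  then obtain B where B0: "\<forall>y\<in>norm ` g ` Sph. norm y \<le> B" unfolding bounded_iff by blast
  have B: "\<forall>x\<in>space M. norm (g x) \<le> B"
  proof
    fix x :: 'a assume "x \<in> space M"
    then have "x \<in> Sph" using sm_space[OF M] by simp
    then have "norm (norm (g x)) \<le> B" using B0 by blast
    then show "norm (g x) \<le> B" by simp
  qed
  show ?thesis
    by (rule integrable_const_bound[where B=B]) (use B meas in auto)
qed

lemma sm_integral_pos:
  fixes g :: "'a::euclidean_space \<Rightarrow> real"
  assumes M: "sphere_measure M" and c: "continuous_on Sph g" and pos: "\<forall>u\<in>Sph. g u > 0"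
  shows "integral\<^sup>L M g > 0"
proof -
  interpret finite_measure M using M unfolding sphere_measure_def by blast
  have "\<exists>x\<in>Sph. \<forall>y\<in>Sph. g x \<le> g y"
    by (rule continuous_attains_inf[OF compact_sphere Sph_ne c])
  then obtain v where v: "v \<in> Sph" "\<forall>u\<in>Sph. g v \<le> g u" by blast
  have le: "integral\<^sup>L M (\<lambda>_. g v) \<le> integral\<^sup>L M g"
  proof (rule integral_mono)
    show "integrable M (\<lambda>_. g v)" by simp
    show "integrable M g" by (rule sm_integrable[OF M c])
    fix x assume "x \<in> space M"
    then have "x \<in> Sph" using sm_space[OF M] by simp
    then show "g v \<le> g x" using v by blast
  qed
  have "integral\<^sup>L M (\<lambda>_. g v) = g v * measure M (space M)" by simp
  moreover have "g v > 0" using pos v by blast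
  then have "g v * measure M (space M) > 0" using sm_pos[OF M] by simp
  ultimately show ?thesis using le by linarith
qed


lemma cb0D:
  assumes "S \<in> convex_bodies_0"
  shows "compact S" "convex S" "0 \<in> interior S"
  using assms unfolding convex_bodies_0_def by simp_all

lemma frontier_sub:
  fixes S :: "'a::euclidean_space set"
  assumes "compact S" shows "frontier S \<subseteq> S"
proof -
  have "closed S" using assms by (rule compact_imp_closed)
  then show ?thesis by (rule frontier_subset_closed)
qed

lemma key:
  fixes S :: "'a::euclidean_space set"
  assumes S: "compact S" "convex S" "0 \<in> interior S" and u: "u \<in> Sph"
  shows "\<exists>d>0. d *\<^sub>R u \<in> frontier S \<and> radial_fun S u = d \<and> (\<forall>t>0. t *\<^sub>R u \<in> S \<longrightarrow> t \<le> d)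
          \<and> (\<forall>e. 0 \<le> e \<and> e < d \<longrightarrow> e *\<^sub>R u \<in> interior S)"
proof -
  have u0: "u \<noteq> 0" using u by auto
  have bS: "bounded S" using S(1) by (rule compact_imp_bounded)
  obtain d where d1: "0<d" and d2': "0 + d *\<^sub>R u \<in> frontier S"
    and d3': "\<And>e. 0\<le>e \<Longrightarrow> e<d \<Longrightarrow> 0 + e *\<^sub>R u \<in> interior S"
    using ray_to_frontier[OF bS S(3) u0] by blast
  have d2: "d *\<^sub>R u \<in> frontier S" using d2' by simp
  have d3: "\<forall>e. 0 \<le> e \<and> e < d \<longrightarrow> e *\<^sub>R u \<in> interior S" using d3' by simp
  have dS: "d *\<^sub>R u \<in> S" using d2 frontier_sub[OF S(1)] by blast
  have le: "t \<le> d" if t: "t>0" "t *\<^sub>R u \<in> S" for t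
  proof (rule ccontr)
    assume "\<not> t \<le> d"
    then have td: "d < t" by simp
    have ne: "0 \<noteq> t *\<^sub>R u" using t(1) u0 by simp
    have eq: "d *\<^sub>R u = (1 - d/t) *\<^sub>R 0 + (d/t) *\<^sub>R (t *\<^sub>R u)" using t(1) by simp
    have "0 < d/t" "d/t < 1" using d1 td t(1) by simp_all
    then have "d *\<^sub>R u \<in> open_segment 0 (t *\<^sub>R u)"
      unfolding in_segment using ne eq by blast
    moreover have "t *\<^sub>R u \<in> closure S" using t(2) closure_subset by blast
    then have "open_segment 0 (t *\<^sub>R u) \<subseteq> interior S"
      by (rule in_interior_closure_convex_segment[OF S(2) S(3)])
    ultimately have "d *\<^sub>R u \<in> interior S" by blast
    with d2 show False unfolding frontier_def by blast
  qed
  have "radial_fun S u = d" unfolding radial_fun_def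
  proof (rule cSup_eq_maximum)
    show "d \<in> {t. 0 < t \<and> t *\<^sub>R u \<in> S}" using d1 dS by simp
    show "\<And>x. x \<in> {t. 0 < t \<and> t *\<^sub>R u \<in> S} \<Longrightarrow> x \<le> d" using le by simp
  qed
  then show ?thesis using d1 d2 d3 le by blast
qed

lemma radial_Cplus:
  fixes S :: "'a::euclidean_space set"
  assumes "S \<in> convex_bodies_0"
  shows "radial_fun S \<in> Cplus"
proof -
  note S = cb0D[OF assms]
  define B where "B = frontier S"
  define proj where "proj = (\<lambda>x::'a. x /\<^sub>R norm x)"
  have cB: "compact B" unfolding B_def using S(1) by (rule compact_frontier)
  have B0: "0 \<notin> B" unfolding B_def frontier_def using S(3) by simp
  have cont: "continuous_on B proj" unfolding proj_def
    by (intro continuous_intros) (use B0 in auto)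
  have nx: "radial_fun S (proj x) = norm x \<and> proj x \<in> Sph \<and> x = norm x *\<^sub>R proj x" if xB: "x \<in> B" for x
  proof -
    have x0: "x \<noteq> 0" using xB B0 by auto
    have ps: "proj x \<in> Sph" using x0 by (simp add: proj_def)
    have xe: "x = norm x *\<^sub>R proj x" using x0 by (simp add: proj_def)
    obtain d where d: "d>0" "d *\<^sub>R proj x \<in> frontier S" "radial_fun S (proj x) = d"
      "\<forall>t>0. t *\<^sub>R proj x \<in> S \<longrightarrow> t \<le> d" "\<forall>e. 0 \<le> e \<and> e < d \<longrightarrow> e *\<^sub>R proj x \<in> interior S"
      using key[OF S ps] by blast
    have xS: "x \<in> S" using xB frontier_sub[OF S(1)] unfolding B_def by blast
    have n0: "norm x > 0" using x0 by simp
    have "norm x *\<^sub>R proj x \<in> S" using xS xe by simp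
    then have le: "norm x \<le> d" using d(4) n0 by blast
    have nlt: "\<not> norm x < d"
    proof
      assume "norm x < d"
      then have "norm x *\<^sub>R proj x \<in> interior S" using d(5) by simp
      then have "x \<in> interior S" using xe by simp
      then show False using xB unfolding B_def frontier_def by blast
    qed
    have "radial_fun S (proj x) = norm x" using d(3) le nlt by simp
    then show ?thesis using ps xe by blast
  qed
  have inj: "inj_on proj B"
  proof
    fix x y assume xy: "x \<in> B" "y \<in> B" "proj x = proj y"
    have "x = norm x *\<^sub>R proj x" using nx[OF xy(1)] by blast
    also have "norm x = norm y" using nx[OF xy(1)] nx[OF xy(2)] xy(3) by simp
    also have "norm y *\<^sub>R proj x = y" using nx[OF xy(2)] xy(3) by simp
    finally show "x = y" .
  qed
  have img: "proj ` B = Sph"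
  proof
    show "proj ` B \<subseteq> Sph" using nx by blast
    show "Sph \<subseteq> proj ` B"
    proof
      fix u :: 'a assume u: "u \<in> Sph"
      obtain d where d: "d>0" "d *\<^sub>R u \<in> frontier S"
        using key[OF S u] by blast
      have "proj (d *\<^sub>R u) = u" using d u by (simp add: proj_def)
      moreover have "d *\<^sub>R u \<in> B" using d(2) unfolding B_def .
      ultimately show "u \<in> proj ` B" by (rule image_eqI[OF sym])
    qed
  qed
  obtain g where g: "homeomorphism B Sph proj g"
    using homeomorphism_compact[OF cB cont img inj] by blast
  have gc: "continuous_on Sph g" and gB: "\<And>u. u \<in> Sph \<Longrightarrow> g u \<in> B"
    and pg: "\<And>u. u \<in> Sph \<Longrightarrow> proj (g u) = u"
    using g unfolding homeomorphism_def by auto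
  have eq: "radial_fun S u = norm (g u)" if u: "u \<in> Sph" for u
  proof -
    have "radial_fun S (proj (g u)) = norm (g u)" using nx[OF gB[OF u]] by blast
    then show ?thesis using pg[OF u] by simp
  qed
  have "continuous_on Sph (\<lambda>u. norm (g u))" by (intro continuous_intros gc)
  then have c: "continuous_on Sph (radial_fun S)"
    by (rule continuous_on_cong[THEN iffD1, rotated 2]) (use eq in auto)
  have p: "\<forall>u\<in>Sph. radial_fun S u > 0"
  proof
    fix u :: 'a assume u: "u \<in> Sph"
    obtain d where "d>0" "radial_fun S u = d" using key[OF S u] by blast
    then show "radial_fun S u > 0" by simp
  qed
  show ?thesis unfolding Cplus_def using c p by blast
qed

lemma wulff_body:
  fixes f :: "'a::euclidean_space \<Rightarrow> real"
  assumes "f \<in> Cplus"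
  shows "wulff f \<in> convex_bodies_0"
proof -
  have fc: "continuous_on Sph f" and fp: "\<forall>u\<in>Sph. f u > 0" using assms unfolding Cplus_def by auto
  define C where "C = wulff f"
  have cc: "continuous_on Sph (\<lambda>u. f u *\<^sub>R u)" by (intro continuous_intros fc)
  have comp: "compact C" unfolding C_def wulff_def
    by (intro compact_convex_hull compact_continuous_image cc compact_sphere)
  have conv: "convex C" unfolding C_def wulff_def by simp
  have clo: "closed C" using comp by (rule compact_imp_closed)
  have inC: "f u *\<^sub>R u \<in> C" if "u \<in> Sph" for u
    unfolding C_def wulff_def using that by (intro hull_inc imageI)
  have "\<exists>x\<in>Sph. \<forall>y\<in>Sph. f x \<le> f y"
    by (rule continuous_attains_inf[OF compact_sphere Sph_ne fc])
  then obtain v where v: "v \<in> Sph" "\<forall>u\<in>Sph. f v \<le> f u" by blast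
  define m where "m = f v"
  have m0: "m > 0" using fp v(1) unfolding m_def by blast
  have Cne: "C \<noteq> {}" using inC[OF v(1)] by blast
  have ball: "ball 0 m \<subseteq> C"
  proof
    fix z :: 'a assume z: "z \<in> ball 0 m"
    show "z \<in> C"
    proof (rule ccontr)
      assume zC: "z \<notin> C"
      obtain a b where ab1: "inner a z < b" and ab2: "\<exists>y\<in>C. inner a y = b" and ab3: "\<forall>x\<in>C. inner a x \<ge> b"
        using supporting_hyperplane_closed_point[OF conv clo Cne zC] by blast
      have a0: "a \<noteq> 0"
      proof
        assume "a = 0" then show False using ab1 ab2 by simp
      qed
      define w where "w = - (a /\<^sub>R norm a)"
      have w: "w \<in> Sph" using a0 by (simp add: w_def)
      have iw: "inner a w = - norm a"
      proof -
        have "inner a w = - (inner a a / norm a)" by (simp add: w_def divide_inverse mult.commute)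
        also have "inner a a = norm a * norm a" by (simp add: dot_square_norm power2_eq_square)
        finally show ?thesis using a0 by simp
      qed
      have "inner a (f w *\<^sub>R w) = - f w * norm a" using iw by simp
      then have "- f w * norm a \<ge> b" using ab3 inC[OF w] by metis
      moreover have "inner a z \<ge> - (norm a * norm z)"
      proof -
        have "inner a (-z) \<le> norm a * norm (-z)" by (rule norm_cauchy_schwarz)
        then show ?thesis by simp
      qed
      ultimately have "f w * norm a < norm z * norm a" using ab1 by (simp add: mult.commute)
      then have "f w < norm z" using a0 by simp
      moreover have "norm z < m" using z by simp
      moreover have "m \<le> f w" using v(2) w unfolding m_def by blast
      ultimately show False by simp
    qed
  qed
  have "0 \<in> interior C" unfolding mem_interior using ball m0 by blast
  then show ?thesis using comp conv unfolding convex_bodies_0_def C_def by simp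
qed

lemma wulff_radial:
  fixes L :: "'a::euclidean_space set"
  assumes L: "L \<in> convex_bodies_0"
  shows "wulff (radial_fun L) = L"
proof
  note S = cb0D[OF L]
  show "wulff (radial_fun L) \<subseteq> L" unfolding wulff_def
  proof (rule hull_minimal)
    show "(\<lambda>u. radial_fun L u *\<^sub>R u) ` Sph \<subseteq> L"
    proof
      fix x assume "x \<in> (\<lambda>u. radial_fun L u *\<^sub>R u) ` Sph"
      then obtain u where u: "u \<in> Sph" "x = radial_fun L u *\<^sub>R u" by blast
      obtain d where d: "d *\<^sub>R u \<in> frontier L" "radial_fun L u = d" using key[OF S u(1)] by blast
      show "x \<in> L" using d u(2) frontier_sub[OF S(1)] by auto
    qed
    show "convex L" by (rule S(2))
  qed
  show "L \<subseteq> wulff (radial_fun L)"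
  proof
    fix x assume xL: "x \<in> L"
    have W0: "0 \<in> wulff (radial_fun L)"
      using cb0D(3)[OF wulff_body[OF radial_Cplus[OF L]]] interior_subset by blast
    have Wc: "convex (wulff (radial_fun L))" unfolding wulff_def by simp
    show "x \<in> wulff (radial_fun L)"
    proof (cases "x = 0")
      case True then show ?thesis using W0 by simp
    next
      case False
      define u where "u = x /\<^sub>R norm x"
      have u: "u \<in> Sph" using False by (simp add: u_def)
      have xe: "x = norm x *\<^sub>R u" using False by (simp add: u_def)
      obtain d where d: "d>0" "radial_fun L u = d" "\<forall>t>0. t *\<^sub>R u \<in> L \<longrightarrow> t \<le> d"
        using key[OF S u] by blast
      have n0: "norm x > 0" using False by simp
      have "norm x *\<^sub>R u \<in> L" using xL xe by simp
      then have nd: "norm x \<le> d" using d(3) n0 by blast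
      have vW: "d *\<^sub>R u \<in> wulff (radial_fun L)"
        unfolding wulff_def by (rule hull_inc, rule image_eqI[where x=u]) (use u d(2) in simp_all)
      have c1: "0 \<le> 1 - norm x / d" using nd d(1) by simp
      have c2: "0 \<le> norm x / d" using d(1) by simp
      have "(1 - norm x / d) *\<^sub>R 0 + (norm x / d) *\<^sub>R (d *\<^sub>R u) \<in> wulff (radial_fun L)"
        by (rule convexD[OF Wc W0 vW c1 c2]) simp
      moreover have "(1 - norm x / d) *\<^sub>R 0 + (norm x / d) *\<^sub>R (d *\<^sub>R u) = x"
        using d(1) xe by simp
      ultimately show ?thesis by simp
    qed
  qed
qed

lemma f_le_radial:
  fixes f :: "'a::euclidean_space \<Rightarrow> real"
  assumes f: "f \<in> Cplus" and u: "u \<in> Sph"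
  shows "f u \<le> radial_fun (wulff f) u"
proof -
  note S = cb0D[OF wulff_body[OF f]]
  have m: "f u *\<^sub>R u \<in> wulff f" unfolding wulff_def using u by (intro hull_inc imageI)
  have p: "f u > 0" using f u unfolding Cplus_def by auto
  obtain d where d: "radial_fun (wulff f) u = d" "\<forall>t>0. t *\<^sub>R u \<in> wulff f \<longrightarrow> t \<le> d"
    using key[OF S u] by blast
  show ?thesis using d m p by simp
qed



lemma powr_cont:
  fixes g :: "'a::euclidean_space \<Rightarrow> real"
  assumes "g \<in> Cplus"
  shows "continuous_on Sph (\<lambda>u. g u powr (- p))" "\<forall>u\<in>Sph. g u powr (- p) > 0"
proof -
  have c: "continuous_on Sph g" and pos: "\<forall>u\<in>Sph. g u > 0" using assms unfolding Cplus_def by auto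
  show "continuous_on Sph (\<lambda>u. g u powr (- p))"
  proof -
    have nz: "\<forall>u\<in>Sph. g u \<noteq> 0"
    proof
      fix u :: 'a assume "u \<in> Sph"
      then have "0 < g u" using pos by blast
      then show "g u \<noteq> 0" by simp
    qed
    show ?thesis using continuous_on_powr[OF c continuous_on_const nz] .
  qed
  show "\<forall>u\<in>Sph. g u powr (- p) > 0"
  proof
    fix u :: 'a assume "u \<in> Sph"
    then have "0 < g u" using pos by blast
    then show "g u powr (- p) > 0" by simp
  qed
qed

lemma Phi_le:
  fixes f :: "'a::euclidean_space \<Rightarrow> real"
  assumes p: "p \<noteq> 0" and mu: "sphere_measure mu" and f: "f \<in> Cplus"
  shows "Phi lam mu p f \<le> Phi lam mu p (radial_fun (wulff f))"
proof -
  define L where "L = wulff f"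
  have Lb: "L \<in> convex_bodies_0" unfolding L_def using wulff_body[OF f] .
  have rC: "radial_fun L \<in> Cplus" using radial_Cplus[OF Lb] .
  have W: "wulff (radial_fun L) = wulff f" using wulff_radial[OF Lb] L_def by simp
  have le: "\<And>u. u \<in> Sph \<Longrightarrow> f u \<le> radial_fun L u" using f_le_radial[OF f] L_def by simp
  have fpos: "\<And>u. u \<in> Sph \<Longrightarrow> f u > 0" using f unfolding Cplus_def by auto
  define A where "A = (\<integral>u. f u powr (- p) \<partial>mu)"
  define B where "B = (\<integral>u. radial_fun L u powr (- p) \<partial>mu)"
  define c where "c = 1 / measure mu (space mu)"
  have c0: "c > 0" using sm_pos[OF mu] c_def by simp
  have iA: "integrable mu (\<lambda>u. f u powr (- p))" using sm_integrable[OF mu powr_cont(1)[OF f]] .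
  have iB: "integrable mu (\<lambda>u. radial_fun L u powr (- p))" using sm_integrable[OF mu powr_cont(1)[OF rC]] .
  have A0: "A > 0" unfolding A_def using sm_integral_pos[OF mu powr_cont[OF f]] .
  have B0: "B > 0" unfolding B_def using sm_integral_pos[OF mu powr_cont[OF rC]] .
  have key: "- (1 / p) * ln (c * A) \<le> - (1 / p) * ln (c * B)"
  proof (cases "p > 0")
    case True
    have "B \<le> A" unfolding A_def B_def
    proof (rule integral_mono[OF iB iA])
      fix u assume "u \<in> space mu"
      then have u: "u \<in> Sph" using sm_space[OF mu] by simp
      show "radial_fun L u powr (- p) \<le> f u powr (- p)"
        by (rule powr_mono2'[OF _ fpos[OF u] le[OF u]]) (use True in simp)
    qed
    then have "c * B \<le> c * A" using c0 by (intro mult_left_mono) auto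
    then have "ln (c * B) \<le> ln (c * A)"
      using ln_le_cancel_iff[of "c*B" "c*A"] A0 B0 c0 by (metis mult_pos_pos)
    moreover have "- (1/p) \<le> 0" using True by (simp add: less_imp_le)
    ultimately show ?thesis by (rule mult_left_mono_neg)
  next
    case False
    then have pn: "p < 0" using p by simp
    have "A \<le> B" unfolding A_def B_def
    proof (rule integral_mono[OF iA iB])
      fix u assume "u \<in> space mu"
      then have u: "u \<in> Sph" using sm_space[OF mu] by simp
      show "f u powr (- p) \<le> radial_fun L u powr (- p)"
        by (rule powr_mono2[OF _ _ le[OF u]]) (use pn fpos[OF u] in simp_all)
    qed
    then have "c * A \<le> c * B" using c0 by (intro mult_left_mono) auto
    then have "ln (c * A) \<le> ln (c * B)"
      using ln_le_cancel_iff[of "c*A" "c*B"] A0 B0 c0 by (metis mult_pos_pos)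
    moreover have "- (1/p) \<ge> 0" using pn by (simp add: less_imp_le)
    ultimately show ?thesis by (rule mult_left_mono)
  qed
  have e: "Phi lam mu p f = - (1 / measure lam (space lam)) * (\<integral>x. ln (supp_fun (wulff f) x) \<partial>lam) - (1 / p) * ln (c * A)"
    unfolding Phi_def A_def c_def by (rule refl)
  have e2: "Phi lam mu p (radial_fun L) = - (1 / measure lam (space lam)) * (\<integral>x. ln (supp_fun (wulff f) x) \<partial>lam) - (1 / p) * ln (c * B)"
    unfolding Phi_def B_def c_def W by (rule refl)
  show ?thesis using key unfolding e e2[unfolded L_def] by linarith
qed

theorem lemma5p1:
  fixes lam mu :: "'a::euclidean_space measure" and p :: real and K :: "'a set"
  assumes "p \<noteq> 0"
    and "sphere_measure lam" and "sphere_measure mu"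
    and "K \<in> convex_bodies_0"
  shows "(\<forall>L\<in>convex_bodies_0. Phi lam mu p (radial_fun L) \<le> Phi lam mu p (radial_fun K))
     \<longleftrightarrow> (\<forall>f\<in>Cplus. Phi lam mu p f \<le> Phi lam mu p (radial_fun K))"
proof
  assume H: "\<forall>L\<in>convex_bodies_0. Phi lam mu p (radial_fun L) \<le> Phi lam mu p (radial_fun K)"
  show "\<forall>f\<in>Cplus. Phi lam mu p f \<le> Phi lam mu p (radial_fun K)"
  proof
    fix f :: "'a \<Rightarrow> real" assume f: "f \<in> Cplus"
    have "Phi lam mu p f \<le> Phi lam mu p (radial_fun (wulff f))"
      using Phi_le[OF assms(1) assms(3) f] .
    also have "\<dots> \<le> Phi lam mu p (radial_fun K)" using H wulff_body[OF f] by blast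
    finally show "Phi lam mu p f \<le> Phi lam mu p (radial_fun K)" .
  qed
next
  assume H: "\<forall>f\<in>Cplus. Phi lam mu p f \<le> Phi lam mu p (radial_fun K)"
  show "\<forall>L\<in>convex_bodies_0. Phi lam mu p (radial_fun L) \<le> Phi lam mu p (radial_fun K)"
    using H radial_Cplus by blast
qed


end
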